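(* Let $\mathcal{O}$ be a nonempty set of quantum channels on $n$ qubits and let $\Psi$ be a quantum channel on $n$ qubits with $\gamma(\Psi)<\infty$. Let $\mathcal{O}_\Psi:=\mathcal{O}\cup\{\Psi\}$. Then for every sample $S=(z_1,\ldots,z_m)$ with $z_i\in\mathbb{F}_2^n\times\mathbb{F}_2^n$, \[ \hat{R}_S(\mathcal{F}(\mathcal{O}))\le \hat{R}_S(\mathcal{F}(\mathcal{O}_\Psi))\le (1+\gamma(\Psi))\,\hat{R}_S(\mathcal{F}(\mathcal{O})). \] Consequently, for every probability distribution $D$ on $\mathbb{F}_2^n\times\mathbb{F}_2^n$, \[ R_D(\mathcal{F}(\mathcal{O}))\le R_D(\mathcal{F}(\mathcal{O}_\Psi))\le (1+\gamma(\Psi))\,R_D(\mathcal{F}(\mathcal{O})). \]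
   Context: A quantum channel on $n$ qubits is a completely positive trace-preserving linear map on $2^n\times 2^n$ complex matrices. For a channel (or, more generally, a linear map) $\Phi$, define $f_\Phi:\mathbb{F}_2^n\times\mathbb{F}_2^n\to\mathbb{R}$ by $f_\Phi(x,y)=\mathrm{Tr}[\Phi(|x\rangle\langle x|)\,|y\rangle\langle y|]$, where $|x\rangle$ is the computational basis state; $f_\Phi$ depends linearly on $\Phi$. For a set $\Omega$ of channels, $\mathcal{F}(\Omega)=\{f_\Phi:\Phi\in\Omega\}$. For a class $\mathcal{G}$ of real-valued functions and a sample $S=(z_1,\ldots,z_m)$, the empirical Rademacher complexity is $\hat{R}_S(\mathcal{G})=\mathbb{E}_{\epsilon}\big[\sup_{g\in\mathcal{G}}\frac1m\sum_{i=1}^m\epsilon_i g(z_i)\big]$, where $\epsilon_1,\ldots,\epsilon_m$ are i.i.d. uniform on $\{-1,+1\}$. For a distribution $D$, $R_D(\mathcal{G})=\mathbb{E}_{S\sim D^m}[\hat{R}_S(\mathcal{G})]$ (samples $z_i$ i.i.d. from $D$). $\mathrm{Conv}(\mathcal{O})$ is the convex hull of $\mathcal{O}$. The free robustness of a channel $\Psi$ with respect to $\mathcal{O}$ is $\gamma(\Psi)=\inf\{\lambda\ge0:\exists\,\Phi\in\mathrm{Conv}(\mathcal{O})\text{ with }(\Psi+\lambda\Phi)/(1+\lambda)\in\mathrm{Conv}(\mathcal{O})\}$. *)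

theory Defs
  imports "Jordan_Normal_Form.Matrix" "HOL-Probability.Product_PMF"
begin

definition psd :: "nat \<Rightarrow> complex mat \<Rightarrow> bool" where
  "psd N X \<longleftrightarrow> X \<in> carrier_mat N N \<and>
     (\<forall>v :: nat \<Rightarrow> complex.
        let q = (\<Sum>i<N. \<Sum>j<N. cnj (v i) * X $$ (i, j) * v j) in Im q = 0 \<and> Re q \<ge> 0)"

text \<open>(id_k tensor Phi) applied to a kN x kN matrix, viewed as a k x k block matrix
  of N x N blocks.\<close>
definition ampl :: "nat \<Rightarrow> nat \<Rightarrow> (complex mat \<Rightarrow> complex mat) \<Rightarrow> complex mat \<Rightarrow> complex mat" where
  "ampl N k \<Phi> X = Matrix.mat (k * N) (k * N) (\<lambda>(i, j).
      \<Phi> (Matrix.mat N N (\<lambda>(r, s). X $$ ((i div N) * N + r, (j div N) * N + s))) $$ (i mod N, j mod N))"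

definition is_cptp :: "nat \<Rightarrow> (complex mat \<Rightarrow> complex mat) \<Rightarrow> bool" where
  "is_cptp N \<Phi> \<longleftrightarrow>
     (\<forall>X \<in> carrier_mat N N. \<Phi> X \<in> carrier_mat N N) \<and>
     (\<forall>X \<in> carrier_mat N N. \<forall>Y \<in> carrier_mat N N. \<Phi> (X + Y) = \<Phi> X + \<Phi> Y) \<and>
     (\<forall>X \<in> carrier_mat N N. \<forall>c :: complex. \<Phi> (c \<cdot>\<^sub>m X) = c \<cdot>\<^sub>m \<Phi> X) \<and>
     (\<forall>X \<in> carrier_mat N N. (\<Sum>i<N. \<Phi> X $$ (i, i)) = (\<Sum>i<N. X $$ (i, i))) \<and>
     (\<forall>k. \<forall>X. psd (k * N) X \<longrightarrow> psd (k * N) (ampl N k \<Phi> X))"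

definition qchannel :: "nat \<Rightarrow> (complex mat \<Rightarrow> complex mat) \<Rightarrow> bool" where
  "qchannel n \<Phi> \<longleftrightarrow> is_cptp (2 ^ n) \<Phi>"

definition conv_maps :: "nat \<Rightarrow> (complex mat \<Rightarrow> complex mat) set \<Rightarrow> (complex mat \<Rightarrow> complex mat) set" where
  "conv_maps N \<O> = {\<Phi>. \<exists>k (c :: nat \<Rightarrow> real) F.
      (\<forall>i<k. 0 \<le> c i \<and> F i \<in> \<O>) \<and> (\<Sum>i<k. c i) = 1 \<and>
      (\<forall>X \<in> carrier_mat N N.
         \<Phi> X = Matrix.mat N N (\<lambda>(r, s). \<Sum>i<k. complex_of_real (c i) * F i X $$ (r, s)))}"

text \<open>Free robustness (value +infinity if no admissible lambda exists).\<close>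
definition robustness :: "nat \<Rightarrow> (complex mat \<Rightarrow> complex mat) set \<Rightarrow> (complex mat \<Rightarrow> complex mat) \<Rightarrow> ereal" where
  "robustness n \<O> \<Psi> = Inf (ereal ` {t::real. t \<ge> 0 \<and>
      (\<exists>\<Phi> \<in> conv_maps (2 ^ n) \<O>.
         (\<lambda>X. complex_of_real (1 / (1 + t)) \<cdot>\<^sub>m (\<Psi> X + complex_of_real t \<cdot>\<^sub>m \<Phi> X))
           \<in> conv_maps (2 ^ n) \<O>)})"

text \<open>Elements of F_2^n are encoded as natural numbers below 2^n (binary expansion),
  the computational basis state |x> being the x-th standard basis vector.\<close>
definition fchan :: "nat \<Rightarrow> (complex mat \<Rightarrow> complex mat) \<Rightarrow> nat \<times> nat \<Rightarrow> real" where
  "fchan n \<Phi> z = (case z of (x, y) \<Rightarrow>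
      Re (\<Phi> (Matrix.mat (2 ^ n) (2 ^ n) (\<lambda>(i, j). if i = x \<and> j = x then 1 else 0)) $$ (y, y)))"

definition Fset :: "nat \<Rightarrow> (complex mat \<Rightarrow> complex mat) set \<Rightarrow> (nat \<times> nat \<Rightarrow> real) set" where
  "Fset n \<O> = fchan n ` \<O>"

text \<open>Empirical Rademacher complexity of G on the sample S 0, ..., S (m-1); the
  expectation over the uniform signs is the average over all sign patterns, a sign
  pattern being encoded by the set A of indices i with eps_i = +1.\<close>
definition emp_rad :: "nat \<Rightarrow> (nat \<Rightarrow> 'z) \<Rightarrow> ('z \<Rightarrow> real) set \<Rightarrow> real" where
  "emp_rad m S G = (\<Sum>A \<in> Pow {..<m}.
      Sup ((\<lambda>g. (1 / real m) * (\<Sum>i<m. (if i \<in> A then 1 else -1) * g (S i))) ` G)) / 2 ^ m"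

definition rad :: "'z pmf \<Rightarrow> nat \<Rightarrow> ('z \<Rightarrow> real) set \<Rightarrow> real" where
  "rad D m G = measure_pmf.expectation (Pi_pmf {..<m} undefined (\<lambda>_. D)) (\<lambda>S. emp_rad m S G)"

end

theory Submission
  imports Defs
begin

definition hh :: "nat \<Rightarrow> (nat \<Rightarrow> 'z) \<Rightarrow> nat set \<Rightarrow> ('z \<Rightarrow> real) \<Rightarrow> real" where
  "hh m S A g = (1 / real m) * (\<Sum>i<m. (if i \<in> A then 1 else -1) * g (S i))"

lemma emp_rad_hh: "emp_rad m S G = (\<Sum>A \<in> Pow {..<m}. Sup (hh m S A ` G)) / 2 ^ m"
  unfolding emp_rad_def hh_def by simp

lemma sign_sum0:
  assumes "i < (m::nat)"
  shows "(\<Sum>A\<in>Pow {..<m}. (if i \<in> A then 1 else -1 :: real)) = 0"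
proof -
  let ?f = "\<lambda>A. (if i \<in> A then 1 else -1 :: real)"
  have "(\<Sum>A\<in>Pow {..<m}. ?f A) = (\<Sum>A\<in>Pow {..<m}. - ?f A)"
    apply (rule sum.reindex_bij_witness[of _ "\<lambda>A. if i \<in> A then A - {i} else insert i A" "\<lambda>A. if i \<in> A then A - {i} else insert i A"])
    using assms by auto
  then show ?thesis by (simp add: sum_negf)
qed

lemma hh_sum0: "(\<Sum>A\<in>Pow {..<m}. hh m S A g) = 0"
proof -
  have "(\<Sum>A\<in>Pow {..<m}. hh m S A g) =
     (1 / real m) * (\<Sum>i<m. g (S i) * (\<Sum>A\<in>Pow {..<m}. (if i \<in> A then 1 else -1)))"
    unfolding hh_def by (simp add: sum_distrib_left sum_distrib_right sum.swap[of _ "Pow _"] mult.commute)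
  also have "\<dots> = 0" by (simp add: sign_sum0)
  finally show ?thesis .
qed

lemma emp_rad_nonneg:
  assumes "G \<noteq> {}" "\<And>A. bdd_above (hh m S A ` G)"
  shows "0 \<le> emp_rad m S G"
proof -
  obtain g where g: "g \<in> G" using assms by auto
  have "0 = (\<Sum>A\<in>Pow {..<m}. hh m S A g)" by (simp add: hh_sum0)
  also have "\<dots> \<le> (\<Sum>A\<in>Pow {..<m}. Sup (hh m S A ` G))"
    by (rule sum_mono) (use g assms in \<open>auto intro: cSup_upper\<close>)
  finally show ?thesis by (simp add: emp_rad_hh)
qed

lemma emp_rad_mono:
  assumes "G \<noteq> {}" "\<And>A. bdd_above (hh m S A ` G)"
  shows "emp_rad m S G \<le> emp_rad m S (insert p G)"
proof -
  have "(\<Sum>A\<in>Pow {..<m}. Sup (hh m S A ` G)) \<le> (\<Sum>A\<in>Pow {..<m}. Sup (hh m S A ` insert p G))"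
    by (rule sum_mono) (use assms in \<open>simp add: cSup_insert\<close>)
  then show ?thesis by (simp add: emp_rad_hh divide_right_mono)
qed

lemma emp_rad_core:
  assumes "G \<noteq> {}" "\<And>A. bdd_above (hh m S A ` G)" "(t::real) \<ge> 0"
    and hp: "\<And>A. hh m S A p \<le> (1 + t) * Sup (hh m S A ` G) - t * hh m S A r"
    and hr: "\<And>A. hh m S A r \<le> Sup (hh m S A ` G)"
  shows "emp_rad m S (insert p G) \<le> (1 + t) * emp_rad m S G"
proof -
  have "(\<Sum>A\<in>Pow {..<m}. Sup (hh m S A ` insert p G)) \<le>
        (\<Sum>A\<in>Pow {..<m}. (1 + t) * Sup (hh m S A ` G) - t * hh m S A r)"
  proof (rule sum_mono)
    fix A
    have "Sup (hh m S A ` G) \<le> (1 + t) * Sup (hh m S A ` G) - t * hh m S A r"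
      using hr[of A] assms(3) by (simp add: algebra_simps mult_left_mono)
    then show "Sup (hh m S A ` insert p G) \<le> (1 + t) * Sup (hh m S A ` G) - t * hh m S A r"
      using assms hp[of A] by (simp add: cSup_insert)
  qed
  also have "\<dots> = (1 + t) * (\<Sum>A\<in>Pow {..<m}. Sup (hh m S A ` G))"
    by (simp add: sum_subtractf sum_distrib_left[symmetric] hh_sum0)
  finally show ?thesis by (simp add: emp_rad_hh divide_right_mono)
qed

lemma inf_step:
  fixes T :: "real set"
  assumes "T \<noteq> {}" "\<And>t. t \<in> T \<Longrightarrow> 0 \<le> t" "\<And>t. t \<in> T \<Longrightarrow> X \<le> (1 + t) * E" "0 \<le> E"
  shows "X \<le> (1 + Inf T) * E"
proof (cases "E = 0")
  case True
  then show ?thesis using assms by auto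
next
  case False
  then have E: "E > 0" using assms by auto
  have "X / E - 1 \<le> Inf T"
    apply (rule cInf_greatest[OF assms(1)])
    using assms(3) E by (simp add: field_simps)
  then show ?thesis using E by (simp add: field_simps)
qed


definition EE :: "nat \<Rightarrow> nat \<Rightarrow> complex mat" where
  "EE N x = Matrix.mat N N (\<lambda>(i, j). if i = x \<and> j = x then 1 else 0)"

lemma fchan_EE: "fchan n \<Phi> (x, y) = Re (\<Phi> (EE (2^n) x) $$ (y, y))"
  by (simp add: fchan_def EE_def)

lemma sum_if_const: "(\<Sum>j\<in>A. if P then f j else 0) = (if P then (\<Sum>j\<in>A. f j) else (0::'a::comm_monoid_add))"
  by simp

lemma psd_EE: "psd N (EE N x)"
proof -
  have "(\<Sum>i<N. \<Sum>j<N. cnj (v i) * EE N x $$ (i, j) * v j) = (if x < N then cnj (v x) * v x else 0)" for v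
  proof -
    have "(\<Sum>i<N. \<Sum>j<N. cnj (v i) * EE N x $$ (i, j) * v j) =
          (\<Sum>i<N. \<Sum>j<N. (if i = x then (if j = x then cnj (v i) * v j else 0) else 0))"
      by (intro sum.cong refl) (auto simp: EE_def)
    also have "\<dots> = (\<Sum>i<N. if i = x then (\<Sum>j<N. if j = x then cnj (v i) * v j else 0) else 0)"
      by (intro sum.cong refl) auto
    also have "\<dots> = (if x < N then cnj (v x) * v x else 0)"
      by (simp add: sum.delta)
    finally show ?thesis .
  qed
  moreover have "Im (cnj z * z) = 0 \<and> Re (cnj z * z) \<ge> 0" for z :: complex
    by simp
  ultimately show ?thesis unfolding psd_def Let_def by (auto simp: EE_def)
qed

lemma mat_self: "X \<in> carrier_mat N N \<Longrightarrow> Matrix.mat N N (($$) X) = X"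
  by (intro eq_matI) auto

lemma ampl_1:
  assumes "X \<in> carrier_mat N N" "\<Phi> X \<in> carrier_mat N N"
  shows "ampl N 1 \<Phi> X = \<Phi> X"
proof -
  have inner: "Matrix.mat N N (\<lambda>(r, s). X $$ (i div N * N + r, j div N * N + s)) = X" if "i < N" "j < N" for i j
    using that assms(1) mat_self[OF assms(1)] by simp
  show ?thesis
    using assms by (intro eq_matI) (auto simp: ampl_def mat_self[OF assms(1)])
qed

lemma chan_bounds:
  assumes "qchannel n \<Phi>" "y < 2^n"
  shows "0 \<le> fchan n \<Phi> (x, y) \<and> fchan n \<Phi> (x, y) \<le> 1"
proof -
  let ?N = "2^n :: nat"
  let ?E = "EE ?N x"
  have cp: "is_cptp ?N \<Phi>" using assms(1) by (simp add: qchannel_def)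
  have Ec: "?E \<in> carrier_mat ?N ?N" by (simp add: EE_def)
  have PEc: "\<Phi> ?E \<in> carrier_mat ?N ?N" using cp Ec by (simp add: is_cptp_def)
  have "psd (1 * ?N) ?E \<longrightarrow> psd (1 * ?N) (ampl ?N 1 \<Phi> ?E)"
    using cp unfolding is_cptp_def by blast
  then have "psd ?N (ampl ?N 1 \<Phi> ?E)" using psd_EE[of "?N" x] by simp
  then have ps: "psd ?N (\<Phi> ?E)" using ampl_1[of ?E ?N \<Phi>, OF Ec PEc] by simp
  have pos: "Re (\<Phi> ?E $$ (z, z)) \<ge> 0" if "z < ?N" for z
  proof -
    let ?v = "\<lambda>i. if i = z then 1 else (0::complex)"
    have aux: "cnj (?v i) * a * ?v j = (if i = z then (if j = z then a else 0) else 0)" for i j a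
      by simp
    have "(\<Sum>i<?N. \<Sum>j<?N. cnj (?v i) * \<Phi> ?E $$ (i, j) * ?v j) = \<Phi> ?E $$ (z, z)"
    proof -
      have "(\<Sum>i<?N. \<Sum>j<?N. cnj (?v i) * \<Phi> ?E $$ (i, j) * ?v j) =
            (\<Sum>i<?N. if i = z then (\<Sum>j<?N. if j = z then \<Phi> ?E $$ (i, j) else 0) else 0)"
        unfolding aux sum_if_const by (rule refl)
      also have "\<dots> = \<Phi> ?E $$ (z, z)" using that by (simp add: sum.delta)
      finally show ?thesis .
    qed
    moreover have "\<forall>v. Re (\<Sum>i<?N. \<Sum>j<?N. cnj (v i) * \<Phi> ?E $$ (i, j) * v j) \<ge> 0"
      using ps unfolding psd_def Let_def by blast
    then have "Re (\<Sum>i<?N. \<Sum>j<?N. cnj (?v i) * \<Phi> ?E $$ (i, j) * ?v j) \<ge> 0"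
      by (rule spec)
    ultimately show ?thesis by simp
  qed
  have tr: "(\<Sum>i<?N. \<Phi> ?E $$ (i, i)) = (\<Sum>i<?N. ?E $$ (i, i))"
    using cp Ec unfolding is_cptp_def by blast
  also have "\<dots> = (\<Sum>i<?N. if i = x then 1 else 0)"
    by (intro sum.cong refl) (auto simp: EE_def)
  finally have "Re (\<Sum>i<?N. \<Phi> ?E $$ (i, i)) \<le> 1" by (simp add: sum.delta)
  then have "(\<Sum>i<?N. Re (\<Phi> ?E $$ (i, i))) \<le> 1" by (simp add: Re_sum)
  moreover have "Re (\<Phi> ?E $$ (y, y)) \<le> (\<Sum>i<?N. Re (\<Phi> ?E $$ (i, i)))"
    by (rule member_le_sum) (use assms(2) pos in auto)
  ultimately show ?thesis using pos[OF assms(2)] by (simp add: fchan_EE)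
qed


lemma conv_fchan:
  assumes "\<Phi> \<in> conv_maps (2^n) \<O>"
  obtains k :: nat and c F where "\<forall>i<k. 0 \<le> c i \<and> F i \<in> \<O>" "(\<Sum>i<k. c i) = 1"
    "\<forall>z. snd z < 2^n \<longrightarrow> fchan n \<Phi> z = (\<Sum>i<k. c i * fchan n (F i) z)"
    "\<forall>x. \<Phi> (EE (2^n) x) \<in> carrier_mat (2^n) (2^n)"
proof -
  obtain k :: nat and c F where kcF: "\<forall>i<k. 0 \<le> c i \<and> F i \<in> \<O>" "(\<Sum>i<k. c i) = 1"
    "\<forall>X \<in> carrier_mat (2^n) (2^n).
         \<Phi> X = Matrix.mat (2^n) (2^n) (\<lambda>(r, s). \<Sum>i<k. complex_of_real (c i) * F i X $$ (r, s))"
    using assms unfolding conv_maps_def by blast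
  have Ec: "EE (2^n) x \<in> carrier_mat (2^n) (2^n)" for x by (simp add: EE_def)
  have car: "\<forall>x. \<Phi> (EE (2^n) x) \<in> carrier_mat (2^n) (2^n)"
    using kcF(3) Ec by simp
  have "fchan n \<Phi> z = (\<Sum>i<k. c i * fchan n (F i) z)" if "snd z < 2^n" for z
  proof -
    obtain x y where z: "z = (x, y)" by fastforce
    have "\<Phi> (EE (2^n) x) $$ (y, y) = (\<Sum>i<k. complex_of_real (c i) * F i (EE (2^n) x) $$ (y, y))"
      using kcF(3) Ec[of x] that z by simp
    then show ?thesis by (simp add: z fchan_EE Re_sum)
  qed
  then show ?thesis using that kcF(1,2) car by blast
qed

lemma hh_cong: "(\<And>i. i < m \<Longrightarrow> f (S i) = g (S i)) \<Longrightarrow> hh m S A f = hh m S A g"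
  unfolding hh_def by (intro arg_cong[where f="\<lambda>x. _ * x"] sum.cong) auto

lemma hh_comb: "hh m S A (\<lambda>z. (\<Sum>l<k. c l * f l z)) = (\<Sum>l<k. c l * hh m S A (f l))"
  unfolding hh_def by (simp add: sum_distrib_left sum.swap[of _ "{..<k}"] mult_ac)

lemma hh_lin: "hh m S A (\<lambda>z. a * f z - b * g z) = a * hh m S A f - b * hh m S A g"
  unfolding hh_def by (simp add: sum_distrib_left sum_subtractf algebra_simps)

lemma hh_bdd:
  assumes "\<forall>g\<in>G. \<forall>i<m. \<bar>g (S i)\<bar> \<le> 1"
  shows "bdd_above (hh m S A ` G)"
proof (rule bdd_aboveI2)
  fix g assume g: "g \<in> G"
  have "(\<Sum>i<m. (if i \<in> A then 1 else -1) * g (S i)) \<le> (\<Sum>i<m. 1)"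
    by (rule sum_mono) (use assms g in \<open>auto simp: abs_le_iff\<close>)
  then have "(\<Sum>i<m. (if i \<in> A then 1 else -1) * g (S i)) \<le> real m" by simp
  then show "hh m S A g \<le> 1"
    unfolding hh_def by (cases "m = 0") (auto simp: field_simps)
qed

lemma conv_le_Sup:
  assumes "\<Phi> \<in> conv_maps (2^n) \<O>" "\<forall>i<m. snd (S i) < 2^n"
    and bdd: "bdd_above (hh m S A ` Fset n \<O>)"
  shows "hh m S A (fchan n \<Phi>) \<le> Sup (hh m S A ` Fset n \<O>)"
proof -
  obtain k :: nat and c F where kcF: "\<forall>i<k. 0 \<le> c i \<and> F i \<in> \<O>" "(\<Sum>i<k. c i) = 1"
    "\<forall>z. snd z < 2^n \<longrightarrow> fchan n \<Phi> z = (\<Sum>i<k. c i * fchan n (F i) z)"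
    by (rule conv_fchan[OF assms(1)])
  have "hh m S A (fchan n \<Phi>) = hh m S A (\<lambda>z. (\<Sum>l<k. c l * fchan n (F l) z))"
  proof (intro hh_cong)
    fix i assume "i < m"
    show "fchan n \<Phi> (S i) = (\<Sum>l<k. c l * fchan n (F l) (S i))"
      by (rule kcF(3)[rule_format, OF assms(2)[rule_format, OF \<open>i < m\<close>]])
  qed
  also have "\<dots> = (\<Sum>l<k. c l * hh m S A (fchan n (F l)))" by (rule hh_comb)
  also have "\<dots> \<le> (\<Sum>l<k. c l * Sup (hh m S A ` Fset n \<O>))"
  proof (rule sum_mono)
    fix l assume "l \<in> {..<k}"
    then have "0 \<le> c l" "F l \<in> \<O>" using kcF(1) by auto
    from \<open>F l \<in> \<O>\<close> have "fchan n (F l) \<in> Fset n \<O>" unfolding Fset_def by (rule imageI)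
    then have "hh m S A (fchan n (F l)) \<in> hh m S A ` Fset n \<O>" by (rule imageI)
    then have "hh m S A (fchan n (F l)) \<le> Sup (hh m S A ` Fset n \<O>)"
      using bdd by (rule cSup_upper)
    then show "c l * hh m S A (fchan n (F l)) \<le> c l * Sup (hh m S A ` Fset n \<O>)"
      using \<open>0 \<le> c l\<close> by (rule mult_left_mono)
  qed
  also have "\<dots> = Sup (hh m S A ` Fset n \<O>)"
    using kcF(2) by (simp add: sum_distrib_right[symmetric])
  finally show ?thesis .
qed


theorem theorem1:
  fixes n :: nat
    and \<O> :: "(complex mat \<Rightarrow> complex mat) set"
    and \<Psi> :: "complex mat \<Rightarrow> complex mat"
  assumes "\<O> \<noteq> {}"
    and "\<forall>\<Phi> \<in> \<O>. qchannel n \<Phi>"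
    and "qchannel n \<Psi>"
    and "robustness n \<O> \<Psi> < \<infinity>"
  shows "(\<forall>m (S :: nat \<Rightarrow> nat \<times> nat).
            (\<forall>i<m. fst (S i) < 2 ^ n \<and> snd (S i) < 2 ^ n) \<longrightarrow>
              emp_rad m S (Fset n \<O>) \<le> emp_rad m S (Fset n (insert \<Psi> \<O>)) \<and>
              emp_rad m S (Fset n (insert \<Psi> \<O>))
                \<le> (1 + real_of_ereal (robustness n \<O> \<Psi>)) * emp_rad m S (Fset n \<O>))
       \<and> (\<forall>(D :: (nat \<times> nat) pmf) m.
            set_pmf D \<subseteq> {..<2 ^ n} \<times> {..<2 ^ n} \<longrightarrow>
              rad D m (Fset n \<O>) \<le> rad D m (Fset n (insert \<Psi> \<O>)) \<and>
              rad D m (Fset n (insert \<Psi> \<O>))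
                \<le> (1 + real_of_ereal (robustness n \<O> \<Psi>)) * rad D m (Fset n \<O>))"
proof -
  define T where "T = {t::real. t \<ge> 0 \<and>
      (\<exists>\<Phi> \<in> conv_maps (2 ^ n) \<O>.
         (\<lambda>X. complex_of_real (1 / (1 + t)) \<cdot>\<^sub>m (\<Psi> X + complex_of_real t \<cdot>\<^sub>m \<Phi> X))
           \<in> conv_maps (2 ^ n) \<O>)}"
  have rob: "robustness n \<O> \<Psi> = Inf (ereal ` T)" unfolding robustness_def T_def ..
  have Tne: "T \<noteq> {}"
  proof
    assume "T = {}"
    then have "robustness n \<O> \<Psi> = \<infinity>" by (simp add: rob top_ereal_def)
    with assms(4) show False by simp
  qed
  have Tbdd: "bdd_below T" unfolding T_def by (rule bdd_belowI[of _ 0]) auto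
  have gam: "real_of_ereal (robustness n \<O> \<Psi>) = Inf T"
    using ereal_Inf'[OF Tbdd Tne] rob by (metis real_of_ereal.simps(1))
  have bnd: "\<bar>fchan n \<Phi> z\<bar> \<le> 1" if "qchannel n \<Phi>" "snd z < 2^n" for \<Phi> z
  proof -
    obtain x y where z: "z = (x, y)" by fastforce
    show ?thesis using chan_bounds[OF that(1), of y x] that(2) z by auto
  qed
  have FI: "Fset n (insert \<Psi> \<O>) = insert (fchan n \<Psi>) (Fset n \<O>)" by (simp add: Fset_def)
  have main: "emp_rad m S (Fset n \<O>) \<le> emp_rad m S (Fset n (insert \<Psi> \<O>)) \<and>
      emp_rad m S (Fset n (insert \<Psi> \<O>)) \<le> (1 + Inf T) * emp_rad m S (Fset n \<O>)"
    if samp: "\<forall>i<m. snd (S i) < 2^n" for m and S :: "nat \<Rightarrow> nat \<times> nat"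
  proof -
    let ?G = "Fset n \<O>"
    have Gne: "?G \<noteq> {}" using assms(1) by (simp add: Fset_def)
    have Gb: "\<forall>g\<in>?G. \<forall>i<m. \<bar>g (S i)\<bar> \<le> 1" using bnd assms(2) samp by (auto simp: Fset_def)
    have bddG: "\<And>A. bdd_above (hh m S A ` ?G)" by (rule hh_bdd[OF Gb])
    have 1: "emp_rad m S ?G \<le> emp_rad m S (insert (fchan n \<Psi>) ?G)"
      by (rule emp_rad_mono[OF Gne bddG])
    have 2: "emp_rad m S (insert (fchan n \<Psi>) ?G) \<le> (1 + t) * emp_rad m S ?G" if "t \<in> T" for t
    proof -
      from that obtain \<Phi>1 where t0: "t \<ge> 0" and \<Phi>1: "\<Phi>1 \<in> conv_maps (2^n) \<O>"
        and \<Psi>'c: "(\<lambda>X. complex_of_real (1 / (1 + t)) \<cdot>\<^sub>m (\<Psi> X + complex_of_real t \<cdot>\<^sub>m \<Phi>1 X))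
           \<in> conv_maps (2 ^ n) \<O>"
        unfolding T_def by blast
      define \<Psi>' where "\<Psi>' = (\<lambda>X. complex_of_real (1 / (1 + t)) \<cdot>\<^sub>m (\<Psi> X + complex_of_real t \<cdot>\<^sub>m \<Phi>1 X))"
      have \<Psi>'c2: "\<Psi>' \<in> conv_maps (2^n) \<O>" using \<Psi>'c by (simp add: \<Psi>'_def)
      obtain k :: nat and c F where "\<forall>i<k. 0 \<le> c i \<and> F i \<in> \<O>" "(\<Sum>i<k. c i) = 1"
        "\<forall>z. snd z < 2^n \<longrightarrow> fchan n \<Phi>1 z = (\<Sum>i<k. c i * fchan n (F i) z)"
        and car1: "\<forall>x. \<Phi>1 (EE (2^n) x) \<in> carrier_mat (2^n) (2^n)"
        by (rule conv_fchan[OF \<Phi>1])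
      have car2: "\<Psi> (EE (2^n) x) \<in> carrier_mat (2^n) (2^n)" for x
        using assms(3) by (simp add: qchannel_def is_cptp_def EE_def)
      have dec: "fchan n \<Psi> z = (1 + t) * fchan n \<Psi>' z - t * fchan n \<Phi>1 z" if "snd z < 2^n" for z
      proof -
        obtain x y where z: "z = (x, y)" by fastforce
        have "\<Psi>' (EE (2^n) x) $$ (y, y) = complex_of_real (1 / (1 + t)) *
            (\<Psi> (EE (2^n) x) $$ (y, y) + complex_of_real t * \<Phi>1 (EE (2^n) x) $$ (y, y))"
          using car1[rule_format, of x] car2[of x] that z by (simp add: \<Psi>'_def)
        then have "fchan n \<Psi>' z = (1 / (1 + t)) * (fchan n \<Psi> z + t * fchan n \<Phi>1 z)"
          by (simp add: z fchan_EE)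
        then show ?thesis using t0 by (simp add: field_simps)
      qed
      have hr: "hh m S A (fchan n \<Phi>1) \<le> Sup (hh m S A ` ?G)" for A
        by (rule conv_le_Sup[OF \<Phi>1 samp bddG])
      have hp: "hh m S A (fchan n \<Psi>) \<le> (1 + t) * Sup (hh m S A ` ?G) - t * hh m S A (fchan n \<Phi>1)" for A
      proof -
        have "hh m S A (fchan n \<Psi>) = hh m S A (\<lambda>z. (1 + t) * fchan n \<Psi>' z - t * fchan n \<Phi>1 z)"
        proof (rule hh_cong)
          fix i assume "i < m"
          show "fchan n \<Psi> (S i) = (1 + t) * fchan n \<Psi>' (S i) - t * fchan n \<Phi>1 (S i)"
            by (rule dec[OF samp[rule_format, OF \<open>i < m\<close>]])
        qed
        also have "\<dots> = (1 + t) * hh m S A (fchan n \<Psi>') - t * hh m S A (fchan n \<Phi>1)"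
          by (rule hh_lin)
        also have "\<dots> \<le> (1 + t) * Sup (hh m S A ` ?G) - t * hh m S A (fchan n \<Phi>1)"
          using conv_le_Sup[OF \<Psi>'c2 samp bddG, of A] t0 by (simp add: mult_left_mono)
        finally show ?thesis .
      qed
      show ?thesis by (rule emp_rad_core[OF Gne bddG t0 hp hr])
    qed
    have nn: "0 \<le> emp_rad m S ?G" by (rule emp_rad_nonneg[OF Gne bddG])
    have 3: "emp_rad m S (insert (fchan n \<Psi>) ?G) \<le> (1 + Inf T) * emp_rad m S ?G"
      by (rule inf_step[OF Tne _ 2 nn]) (simp add: T_def)
    show ?thesis using 1 3 FI by simp
  qed
  have part1: "\<forall>m (S :: nat \<Rightarrow> nat \<times> nat).
            (\<forall>i<m. fst (S i) < 2 ^ n \<and> snd (S i) < 2 ^ n) \<longrightarrow>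
              emp_rad m S (Fset n \<O>) \<le> emp_rad m S (Fset n (insert \<Psi> \<O>)) \<and>
              emp_rad m S (Fset n (insert \<Psi> \<O>))
                \<le> (1 + real_of_ereal (robustness n \<O> \<Psi>)) * emp_rad m S (Fset n \<O>)"
  proof (intro allI impI)
    fix m and S :: "nat \<Rightarrow> nat \<times> nat"
    assume "\<forall>i<m. fst (S i) < 2 ^ n \<and> snd (S i) < 2 ^ n"
    then have "\<forall>i<m. snd (S i) < 2 ^ n" by blast
    from main[OF this] show "emp_rad m S (Fset n \<O>) \<le> emp_rad m S (Fset n (insert \<Psi> \<O>)) \<and>
              emp_rad m S (Fset n (insert \<Psi> \<O>))
                \<le> (1 + real_of_ereal (robustness n \<O> \<Psi>)) * emp_rad m S (Fset n \<O>)"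
      unfolding gam .
  qed
  have part2: "\<forall>(D :: (nat \<times> nat) pmf) m.
            set_pmf D \<subseteq> {..<2 ^ n} \<times> {..<2 ^ n} \<longrightarrow>
              rad D m (Fset n \<O>) \<le> rad D m (Fset n (insert \<Psi> \<O>)) \<and>
              rad D m (Fset n (insert \<Psi> \<O>))
                \<le> (1 + real_of_ereal (robustness n \<O> \<Psi>)) * rad D m (Fset n \<O>)"
  proof (intro allI impI)
    fix D :: "(nat \<times> nat) pmf" and m :: nat
    assume sup: "set_pmf D \<subseteq> {..<2 ^ n} \<times> {..<2 ^ n}"
    let ?P = "Pi_pmf {..<m} undefined (\<lambda>_. D)"
    have setP: "set_pmf ?P = PiE_dflt {..<m} undefined (set_pmf \<circ> (\<lambda>_. D))"
      by (rule set_Pi_pmf[OF finite_lessThan])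
    have finD: "finite (set_pmf D)" using sup by (rule finite_subset) simp
    have finP: "finite (set_pmf ?P)" unfolding setP using finD by (intro finite_PiE_dflt) auto
    have samp: "\<forall>i<m. snd (S i) < 2^n" if "S \<in> set_pmf ?P" for S
      using that sup unfolding setP PiE_dflt_def by fastforce
    have int: "integrable (measure_pmf ?P) f" for f :: "_ \<Rightarrow> real"
      by (rule integrable_measure_pmf_finite[OF finP])
    have r1: "rad D m (Fset n \<O>) \<le> rad D m (Fset n (insert \<Psi> \<O>))"
      unfolding rad_def
      by (rule integral_mono_AE[OF int int]) (use main samp in \<open>auto simp: AE_measure_pmf_iff\<close>)
    have "rad D m (Fset n (insert \<Psi> \<O>)) \<le>
          measure_pmf.expectation ?P (\<lambda>S. (1 + Inf T) * emp_rad m S (Fset n \<O>))"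
      unfolding rad_def
      by (rule integral_mono_AE[OF int int]) (use main samp in \<open>auto simp: AE_measure_pmf_iff\<close>)
    also have "\<dots> = (1 + Inf T) * rad D m (Fset n \<O>)"
      unfolding rad_def by (rule integral_mult_right_zero)
    finally show "rad D m (Fset n \<O>) \<le> rad D m (Fset n (insert \<Psi> \<O>)) \<and>
              rad D m (Fset n (insert \<Psi> \<O>))
                \<le> (1 + real_of_ereal (robustness n \<O> \<Psi>)) * rad D m (Fset n \<O>)"
      using r1 unfolding gam by simp
  qed
  show ?thesis using part1 part2 by blast
qed

end
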